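(* Let $(\psi,p,A)$ be a regular normal extremal containing an interior three-bang block $Y(\ell_1)\,X(\tau_X)\,Y(\ell_2)$, i.e. three consecutive arcs, a $Y$-arc of length $\ell_1\in(0,2\pi)$, an $X$-arc of length $\tau_X=\pi/\sin\gamma$, and a $Y$-arc of length $\ell_2\in(0,2\pi)$, whose initial and final times are both switching times. If the reduced data at the initial time of the block are $(0,a,b)$ with $a\neq0$, then the reduced data at its final time are $(0,-a,b)$, i.e. the same as those produced by a single switching-to-switching $X$-arc of length $\tau_X$ started from $(0,a,b)$, while the block has total length $\ell_1+\tau_X+\ell_2>\tau_X$. Consequently, such an interior $YXY$ block cannot occur on a regular normal time-optimal extremal.
   Context: Fix $\gamma\in(0,\pi/2)$, $s=\sin\gamma$, $c=\cos\gamma$, and $X=\begin{pmatrix}0&s^2&sc\\-s^2&0&0\\-sc&0&0\end{pmatrix}$, $Y=\begin{pmatrix}0&1&0\\-1&0&0\\0&0&0\end{pmatrix}$ on $\mathbb R^3$ with standard basis $e_1,e_2,e_3$ and standard inner product. Let $\Sigma=\{\psi:\langle e_3,\psi\rangle=0\}$, $\psi_0=(0,s,c)^\top$. Time-optimal problem: over piecewise constant controls $A:[0,T]\to\{X,Y\}$ with finitely many discontinuities (switching times) and trajectories $\dot\psi=A(t)\psi$, $\psi(0)=\psi_0$, minimize $T$ subject to $\psi(T)\in\Sigma$. Maximal intervals on which $A\equiv X$ (resp. $Y$) are $X$-arcs (resp. $Y$-arcs), also called bangs. A normal extremal is such a trajectory with a nonzero absolutely continuous costate $p$ satisfying $\dot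 p=-A(t)^\top p$ and, for a.e. $t$, $\langle p,A(t)\psi\rangle-1=\max_{B\in\{X,Y\}}(\langle p,B\psi\rangle-1)$. Let $F_1=X-Y$, $F_2=[X,Y]$, $F_3=[Y,[X,Y]]$, and reduced data $(\phi_1,\phi_2,\phi_3)$ with $\phi_i=\langle p,F_i\psi\rangle$; the switching function is $\Phi=\phi_1$. A normal extremal is regular (bang–bang) if $\Phi$ vanishes only at isolated times and at every switching time $\phi_1=0$ and $\phi_2\neq 0$. Time-optimal means the trajectory solves the minimization problem. *)

theory Defs
  imports "HOL-Analysis.Analysis"
begin

definition Xm :: "real \<Rightarrow> real^3^3" where
  "Xm \<gamma> = vector [vector [0, (sin \<gamma>)^2, sin \<gamma> * cos \<gamma>],
                   vector [-((sin \<gamma>)^2), 0, 0],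
                   vector [-(sin \<gamma> * cos \<gamma>), 0, 0]]"

definition Ym :: "real^3^3" where
  "Ym = vector [vector [0, 1, 0], vector [-1, 0, 0], vector [0, 0, 0]]"

definition lie :: "real^3^3 \<Rightarrow> real^3^3 \<Rightarrow> real^3^3" where
  "lie M N = M ** N - N ** M"

definition F1 :: "real \<Rightarrow> real^3^3" where "F1 \<gamma> = Xm \<gamma> - Ym"
definition F2 :: "real \<Rightarrow> real^3^3" where "F2 \<gamma> = lie (Xm \<gamma>) Ym"
definition F3 :: "real \<Rightarrow> real^3^3" where "F3 \<gamma> = lie Ym (lie (Xm \<gamma>) Ym)"

definition e3 :: "real^3" where "e3 = vector [0, 0, 1]"

definition psi0 :: "real \<Rightarrow> real^3" where
  "psi0 \<gamma> = vector [0, sin \<gamma>, cos \<gamma>]"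

definition SigmaT :: "(real^3) set" where "SigmaT = {\<psi>. e3 \<bullet> \<psi> = 0}"

text \<open>Reduced data phi_i = <p, F_i psi>; the switching function is phi_1.\<close>
definition phi :: "real \<Rightarrow> (real \<Rightarrow> real^3) \<Rightarrow> (real \<Rightarrow> real^3) \<Rightarrow> real \<Rightarrow> real \<times> real \<times> real" where
  "phi \<gamma> \<psi> p t = (p t \<bullet> (F1 \<gamma> *v \<psi> t), p t \<bullet> (F2 \<gamma> *v \<psi> t), p t \<bullet> (F3 \<gamma> *v \<psi> t))"

text \<open>Admissible controls: values in {X,Y} on [0,T], piecewise constant with finitely
 many discontinuities (a function with values in a two-point set is continuous at t
 iff it is locally constant at t).\<close>
definition admissible_control :: "real \<Rightarrow> real \<Rightarrow> (real \<Rightarrow> real^3^3) \<Rightarrow> bool" where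
  "admissible_control \<gamma> T A \<longleftrightarrow> 0 \<le> T \<and> (\<forall>t\<in>{0..T}. A t \<in> {Xm \<gamma>, Ym}) \<and>
     (\<exists>S. finite S \<and> (\<forall>t\<in>{0..T} - S. continuous (at t within {0..T}) A))"

definition trajectory :: "real \<Rightarrow> real \<Rightarrow> (real \<Rightarrow> real^3^3) \<Rightarrow> (real \<Rightarrow> real^3) \<Rightarrow> bool" where
  "trajectory \<gamma> T A \<psi> \<longleftrightarrow> admissible_control \<gamma> T A \<and> \<psi> 0 = psi0 \<gamma> \<and>
     continuous_on {0..T} \<psi> \<and>
     (\<exists>S. finite S \<and> (\<forall>t\<in>{0..T} - S.
        (\<psi> has_vector_derivative (A t *v \<psi> t)) (at t within {0..T})))"

definition time_optimal :: "real \<Rightarrow> real \<Rightarrow> (real \<Rightarrow> real^3^3) \<Rightarrow> (real \<Rightarrow> real^3) \<Rightarrow> bool" where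
  "time_optimal \<gamma> T A \<psi> \<longleftrightarrow> trajectory \<gamma> T A \<psi> \<and> \<psi> T \<in> SigmaT \<and>
     (\<forall>T' A' \<psi>'. trajectory \<gamma> T' A' \<psi>' \<and> \<psi>' T' \<in> SigmaT \<longrightarrow> T \<le> T')"

text \<open>Since A is piecewise constant,
 absolute continuity of p together with the a.e. adjoint equation amounts to p being
 continuous and satisfying the adjoint equation outside a finite set.\<close>
definition normal_extremal :: "real \<Rightarrow> real \<Rightarrow> (real \<Rightarrow> real^3^3) \<Rightarrow> (real \<Rightarrow> real^3) \<Rightarrow> (real \<Rightarrow> real^3) \<Rightarrow> bool" where
  "normal_extremal \<gamma> T A \<psi> p \<longleftrightarrow> trajectory \<gamma> T A \<psi> \<and>
     (\<exists>t\<in>{0..T}. p t \<noteq> 0) \<and>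
     continuous_on {0..T} p \<and>
     (\<exists>S. finite S \<and> (\<forall>t\<in>{0..T} - S.
        (p has_vector_derivative (- (transpose (A t) *v p t))) (at t within {0..T}))) \<and>
     (AE t in lebesgue. t \<in> {0..T} \<longrightarrow>
        p t \<bullet> (A t *v \<psi> t) - 1 =
          max (p t \<bullet> (Xm \<gamma> *v \<psi> t) - 1) (p t \<bullet> (Ym *v \<psi> t) - 1))"

definition switching_time :: "real \<Rightarrow> (real \<Rightarrow> real^3^3) \<Rightarrow> real \<Rightarrow> bool" where
  "switching_time T A t \<longleftrightarrow> 0 < t \<and> t < T \<and>
     (\<forall>e>0. \<exists>s1 s2. t - e < s1 \<and> s1 < t \<and> t < s2 \<and> s2 < t + e \<and> A s1 \<noteq> A s2)"

definition regular_normal_extremal :: "real \<Rightarrow> real \<Rightarrow> (real \<Rightarrow> real^3^3) \<Rightarrow> (real \<Rightarrow> real^3) \<Rightarrow> (real \<Rightarrow> real^3) \<Rightarrow> bool" where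
  "regular_normal_extremal \<gamma> T A \<psi> p \<longleftrightarrow> normal_extremal \<gamma> T A \<psi> p \<and>
     (\<forall>t\<in>{0..T}. fst (phi \<gamma> \<psi> p t) = 0 \<longrightarrow>
        (\<exists>e>0. \<forall>s\<in>{0..T}. 0 < \<bar>s - t\<bar> \<and> \<bar>s - t\<bar> < e \<longrightarrow> fst (phi \<gamma> \<psi> p s) \<noteq> 0)) \<and>
     (\<forall>t. switching_time T A t \<longrightarrow>
        fst (phi \<gamma> \<psi> p t) = 0 \<and> fst (snd (phi \<gamma> \<psi> p t)) \<noteq> 0)"

definition YXY_block :: "real \<Rightarrow> real \<Rightarrow> (real \<Rightarrow> real^3^3) \<Rightarrow> real \<Rightarrow> real \<Rightarrow> real \<Rightarrow> real \<Rightarrow> bool" where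
  "YXY_block \<gamma> T A t0 l1 \<tau> l2 \<longleftrightarrow>
     (\<forall>t\<in>{t0<..<t0+l1}. A t = Ym) \<and>
     (\<forall>t\<in>{t0+l1<..<t0+l1+\<tau>}. A t = Xm \<gamma>) \<and>
     (\<forall>t\<in>{t0+l1+\<tau><..<t0+l1+\<tau>+l2}. A t = Ym) \<and>
     switching_time T A t0 \<and> switching_time T A (t0+l1+\<tau>+l2)"

end

theory Submission
  imports Defs
begin

lemma bilin_deriv:
  fixes \<psi> p :: "real \<Rightarrow> real^3" and M F :: "real^3^3"
  assumes d1: "(\<psi> has_vector_derivative (M *v \<psi> t)) (at t within D)"
    and d2: "(p has_vector_derivative (- (transpose M *v p t))) (at t within D)"
  shows "((\<lambda>t. p t \<bullet> (F *v \<psi> t)) has_real_derivative (p t \<bullet> ((F ** M - M ** F) *v \<psi> t))) (at t within D)"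
proof -
  have d3: "((\<lambda>t. F *v \<psi> t) has_vector_derivative (F *v (M *v \<psi> t))) (at t within D)"
    using bounded_linear.has_vector_derivative[OF matrix_vector_mul_bounded_linear d1] .
  have "((\<lambda>t. p t \<bullet> (F *v \<psi> t)) has_vector_derivative (p t \<bullet> (F *v (M *v \<psi> t)) + (- (transpose M *v p t)) \<bullet> (F *v \<psi> t))) (at t within D)"
    using bounded_bilinear.has_vector_derivative[OF bounded_bilinear_inner d2 d3] .
  moreover have "p t \<bullet> (F *v (M *v \<psi> t)) + (- (transpose M *v p t)) \<bullet> (F *v \<psi> t) = p t \<bullet> ((F ** M - M ** F) *v \<psi> t)"
  proof -
    have "(transpose M *v p t) \<bullet> (F *v \<psi> t) = p t \<bullet> (M *v (F *v \<psi> t))"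
    proof -
      have e: "transpose M *v p t = p t v* M" using vector_transpose_matrix[of "p t" "transpose M"] by simp
      show ?thesis unfolding e by (rule dot_lmul_matrix)
    qed
    then show ?thesis
      by (simp add: matrix_vector_mul_assoc matrix_vector_mult_diff_rdistrib inner_diff_right)
  qed
  ultimately show ?thesis by (simp add: has_real_derivative_iff_has_vector_derivative)
qed

lemma XneY: "0 < \<gamma> \<Longrightarrow> \<gamma> < pi/2 \<Longrightarrow> Xm \<gamma> \<noteq> Ym"
proof
  assume "0 < \<gamma>" "\<gamma> < pi/2" "Xm \<gamma> = Ym"
  then have "(Xm \<gamma>)$1$3 = Ym$1$3" by simp
  then have "sin \<gamma> * cos \<gamma> = 0" by (simp add: Xm_def Ym_def)
  moreover have "sin \<gamma> > 0" "cos \<gamma> > 0" using \<open>0 < \<gamma>\<close> \<open>\<gamma> < pi/2\<close>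
    by (auto intro: sin_gt_zero cos_gt_zero)
  ultimately show False by simp
qed

lemma comm_Y1: "F1 g ** Ym - Ym ** F1 g = F2 g"
  by (simp add: F1_def F2_def lie_def Xm_def Ym_def vec_eq_iff forall_3 matrix_matrix_mult_def sum_3 algebra_simps)
lemma comm_Y2: "F2 g ** Ym - Ym ** F2 g = - F3 g"
  by (simp add: F3_def F2_def lie_def Xm_def Ym_def vec_eq_iff forall_3 matrix_matrix_mult_def sum_3 algebra_simps)
lemma comm_Y3: "F3 g ** Ym - Ym ** F3 g = F2 g"
  by (simp add: F3_def F2_def lie_def Xm_def Ym_def vec_eq_iff forall_3 matrix_matrix_mult_def sum_3 algebra_simps)
lemma comm_X1: "F1 g ** Xm g - Xm g ** F1 g = F2 g"
  by (simp add: F1_def F2_def lie_def Xm_def Ym_def vec_eq_iff forall_3 matrix_matrix_mult_def sum_3 algebra_simps)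
lemma sc1: "cos g * (cos g * x) + sin g * (sin g * x) = (x::real)"
proof -
  have h: "cos g * cos g + sin g * sin g = 1" by (metis power2_eq_square sin_cos_squared_add2)
  have "cos g * (cos g * x) + sin g * (sin g * x) = (cos g * cos g + sin g * sin g) * x"
    by (simp only: distrib_right mult.assoc)
  also have "\<dots> = x" by (simp only: h mult_1)
  finally show ?thesis .
qed

lemma F2_eq: "F2 g = vector [vector [0,0,0], vector [0,0,sin g * cos g], vector [0, -(sin g * cos g), 0]]"
  by (simp add: F2_def lie_def Xm_def Ym_def vec_eq_iff forall_3 matrix_matrix_mult_def sum_3)
lemma F3_eq: "F3 g = vector [vector [0,0,sin g * cos g], vector [0,0,0], vector [-(sin g * cos g), 0, 0]]"
  unfolding F3_def F2_def[symmetric] F2_eq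
  by (simp add: lie_def Ym_def vec_eq_iff forall_3 matrix_matrix_mult_def sum_3)
lemma scsq: fixes g :: real shows "sin g * cos g * (sin g * cos g) = (sin g)^2 * (1 - (sin g)^2)"
proof -
  have "sin g * cos g * (sin g * cos g) = (sin g)^2 * (cos g)^2" by (simp add: power2_eq_square mult_ac)
  then show ?thesis by (simp add: cos_squared_eq)
qed
lemma comm_X2: "F2 g ** Xm g - Xm g ** F2 g = - ((sin g)^2) *\<^sub>R F1 g"
  apply (simp add: F2_eq F1_def Xm_def Ym_def vec_eq_iff forall_3 matrix_matrix_mult_def sum_3)
  using scsq[of g] by (simp add: algebra_simps)
lemma comm_X3: "F3 g ** Xm g - Xm g ** F3 g = ((sin g)^2) *\<^sub>R F2 g"
  by (simp add: F2_eq F3_eq Xm_def vec_eq_iff forall_3 matrix_matrix_mult_def sum_3 power2_eq_square algebra_simps)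

lemma const_deriv0:
  fixes W :: "real \<Rightarrow> real"
  assumes "finite K" "continuous_on {u..v} W" "u \<le> v"
    and "\<And>t. t \<in> {u..v} - K \<Longrightarrow> (W has_real_derivative 0) (at t within {u..v})"
  shows "W v = W u"
proof (rule has_derivative_zero_unique_strong_interval[OF assms(1,2) refl])
  fix x assume "x \<in> {u..v} - K"
  then show "(W has_derivative (\<lambda>h. 0)) (at x within {u..v})"
  proof -
    have e: "((*) (0::real)) = (\<lambda>h. 0)" by (rule ext) simp
    show ?thesis using assms(4)[OF \<open>x \<in> {u..v} - K\<close>] unfolding has_field_derivative_def e .
  qed
next
  show "v \<in> {u..v}" using assms(3) by simp
qed

lemma Y_arc:
  fixes g1 g2 g3 :: "real \<Rightarrow> real"
  assumes "u \<le> v" "finite K"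
    and c1: "continuous_on {u..v} g1" and c2: "continuous_on {u..v} g2" and c3: "continuous_on {u..v} g3"
    and d: "\<And>t. t \<in> {u..v} - K \<Longrightarrow> (g1 has_real_derivative g2 t) (at t within {u..v}) \<and>
        (g2 has_real_derivative - g3 t) (at t within {u..v}) \<and>
        (g3 has_real_derivative g2 t) (at t within {u..v})"
  shows "g1 v - g3 v = g1 u - g3 u \<and> g2 v = g2 u * cos (v-u) - g3 u * sin (v-u)
     \<and> g3 v = g2 u * sin (v-u) + g3 u * cos (v-u)"
proof -
  have w1: "(\<lambda>t. g1 t - g3 t) v = (\<lambda>t. g1 t - g3 t) u"
  proof (rule const_deriv0[OF assms(2) _ assms(1)])
    show "continuous_on {u..v} (\<lambda>t. g1 t - g3 t)" using c1 c3 by (intro continuous_intros)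
    fix t assume "t \<in> {u..v} - K"
    from d[OF this] show "((\<lambda>t. g1 t - g3 t) has_real_derivative 0) (at t within {u..v})"
      by (auto intro!: derivative_eq_intros)
  qed
  have w2: "(\<lambda>t. g2 t * cos (t-u) + g3 t * sin (t-u)) v = (\<lambda>t. g2 t * cos (t-u) + g3 t * sin (t-u)) u"
  proof (rule const_deriv0[OF assms(2) _ assms(1)])
    show "continuous_on {u..v} (\<lambda>t. g2 t * cos (t-u) + g3 t * sin (t-u))" using c2 c3 by (intro continuous_intros)
    fix t assume "t \<in> {u..v} - K"
    from d[OF this] show "((\<lambda>t. g2 t * cos (t-u) + g3 t * sin (t-u)) has_real_derivative 0) (at t within {u..v})"
      by (auto intro!: derivative_eq_intros simp: algebra_simps)
  qed
  have w3: "(\<lambda>t. - g2 t * sin (t-u) + g3 t * cos (t-u)) v = (\<lambda>t. - g2 t * sin (t-u) + g3 t * cos (t-u)) u"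
  proof (rule const_deriv0[OF assms(2) _ assms(1)])
    show "continuous_on {u..v} (\<lambda>t. - g2 t * sin (t-u) + g3 t * cos (t-u))" using c2 c3 by (intro continuous_intros)
    fix t assume "t \<in> {u..v} - K"
    from d[OF this] show "((\<lambda>t. - g2 t * sin (t-u) + g3 t * cos (t-u)) has_real_derivative 0) (at t within {u..v})"
      by (auto intro!: derivative_eq_intros simp: algebra_simps)
  qed
  define c where "c = cos (v-u)"
  define s where "s = sin (v-u)"
  have cs: "c * c + s * s = 1" unfolding c_def s_def by (metis power2_eq_square sin_cos_squared_add2)
  have e2: "g2 v * c + g3 v * s = g2 u" using w2 by (simp add: c_def s_def)
  have e3: "- g2 v * s + g3 v * c = g3 u" using w3 by (simp add: c_def s_def)
  have "g2 u * c - g3 u * s = g2 v * (c * c + s * s)"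
    unfolding e2[symmetric] e3[symmetric] by (simp add: algebra_simps)
  moreover have "g2 u * s + g3 u * c = g3 v * (c * c + s * s)"
    unfolding e2[symmetric] e3[symmetric] by (simp add: algebra_simps)
  ultimately show ?thesis using w1 cs by (simp add: c_def s_def)
qed

lemma X_arc:
  fixes g1 g2 g3 :: "real \<Rightarrow> real"
  assumes "0 < k" "v = u + pi / k" "finite K"
    and c1: "continuous_on {u..v} g1" and c2: "continuous_on {u..v} g2" and c3: "continuous_on {u..v} g3"
    and d: "\<And>t. t \<in> {u..v} - K \<Longrightarrow> (g1 has_real_derivative g2 t) (at t within {u..v}) \<and>
        (g2 has_real_derivative - (k^2 * g1 t)) (at t within {u..v}) \<and>
        (g3 has_real_derivative k^2 * g2 t) (at t within {u..v})"
  shows "g1 v = - g1 u \<and> g2 v = - g2 u \<and> g3 v - k^2 * g1 v = g3 u - k^2 * g1 u"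
proof -
  have "pi / k > 0" using assms(1) by simp
  then have uv: "u \<le> v" using assms(2) by simp
  have kv: "k * (v - u) = pi" using assms(1,2) by (simp add: field_simps)
  have w1: "(\<lambda>t. g3 t - k^2 * g1 t) v = (\<lambda>t. g3 t - k^2 * g1 t) u"
  proof (rule const_deriv0[OF assms(3) _ uv])
    show "continuous_on {u..v} (\<lambda>t. g3 t - k^2 * g1 t)" using c1 c3 by (intro continuous_intros)
    fix t assume "t \<in> {u..v} - K"
    from d[OF this] show "((\<lambda>t. g3 t - k^2 * g1 t) has_real_derivative 0) (at t within {u..v})"
      by (auto intro!: derivative_eq_intros)
  qed
  have w2: "(\<lambda>t. k * g1 t * cos (k*(t-u)) - g2 t * sin (k*(t-u))) v = (\<lambda>t. k * g1 t * cos (k*(t-u)) - g2 t * sin (k*(t-u))) u"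
  proof (rule const_deriv0[OF assms(3) _ uv])
    show "continuous_on {u..v} (\<lambda>t. k * g1 t * cos (k*(t-u)) - g2 t * sin (k*(t-u)))" using c1 c2 by (intro continuous_intros)
    fix t assume "t \<in> {u..v} - K"
    from d[OF this] show "((\<lambda>t. k * g1 t * cos (k*(t-u)) - g2 t * sin (k*(t-u))) has_real_derivative 0) (at t within {u..v})"
      using assms(1) by (auto intro!: derivative_eq_intros simp: algebra_simps power2_eq_square)
  qed
  have w3: "(\<lambda>t. k * g1 t * sin (k*(t-u)) + g2 t * cos (k*(t-u))) v = (\<lambda>t. k * g1 t * sin (k*(t-u)) + g2 t * cos (k*(t-u))) u"
  proof (rule const_deriv0[OF assms(3) _ uv])
    show "continuous_on {u..v} (\<lambda>t. k * g1 t * sin (k*(t-u)) + g2 t * cos (k*(t-u)))" using c1 c2 by (intro continuous_intros)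
    fix t assume "t \<in> {u..v} - K"
    from d[OF this] show "((\<lambda>t. k * g1 t * sin (k*(t-u)) + g2 t * cos (k*(t-u))) has_real_derivative 0) (at t within {u..v})"
      using assms(1) by (auto intro!: derivative_eq_intros simp: algebra_simps power2_eq_square)
  qed
  from w2 kv have "k * (g1 v + g1 u) = 0" by (simp add: algebra_simps)
  with assms(1) have "g1 v = - g1 u" by simp
  with w1 w3 kv show ?thesis by simp
qed

lemma rot_lemma:
  fixes a b l :: real
  assumes "a \<noteq> 0" "0 < l" "l < 2*pi" "a * sin l + b * cos l = b"
  shows "a * cos l - b * sin l = - a"
proof -
  define x where "x = a * cos l - b * sin l"
  have cs: "sin l * sin l + cos l * cos l = 1" by (metis power2_eq_square sin_cos_squared_add)
  have "x*x + b*b = (a*a + b*b) * (sin l * sin l + cos l * cos l)"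
    unfolding x_def using assms(4) by (smt (verit) ring_distribs mult.commute mult.left_commute)
  then have "x*x = a*a" using cs by simp
  then have "x = a \<or> x = -a" by (metis minus_mult_minus square_eq_iff)
  moreover have "x \<noteq> a"
  proof
    assume "x = a"
    then have "(a*a + b*b) * cos l = a*a + b*b"
      using assms(4) unfolding x_def by (smt (verit) ring_distribs mult.commute mult.left_commute)
    moreover have "a*a + b*b > 0"
    proof -
      have "a*a > 0" by (metis assms(1) not_real_square_gt_zero)
      moreover have "b*b \<ge> 0" by simp
      ultimately show ?thesis by linarith
    qed
    ultimately have "cos l = 1" by (metis less_irrefl mult_cancel_left1)
    then obtain n :: int where n: "l = n * 2 * pi" by (auto simp: cos_one_2pi_int)
    with assms(2,3) have "0 < n" "n < 1" by (auto simp: zero_less_mult_iff mult_less_cancel_right2)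
    then show False by simp
  qed
  ultimately show ?thesis unfolding x_def by simp
qed


lemma mv_neg: "(- M) *v (x::real^3) = - (M *v x)"
  by (simp add: vec_eq_iff matrix_vector_mult_def sum_negf)

lemma mv_scale: "(c *\<^sub>R M) *v (x::real^3) = c *\<^sub>R (M *v x)"
  by (simp add: vec_eq_iff matrix_vector_mult_def sum_distrib_left mult.assoc)

lemma mv_add_scale: "M *v (a *\<^sub>R x + b *\<^sub>R y) = a *\<^sub>R (M *v x) + b *\<^sub>R (M *v (y::real^3))"
  by (simp add: vec_eq_iff matrix_vector_mult_def sum.distrib sum_distrib_left algebra_simps)

lemma arc_deriv:
  fixes \<psi> p :: "real \<Rightarrow> real^3" and A :: "real \<Rightarrow> real^3^3"
  assumes dpsi: "\<forall>t\<in>{0..T} - S1. (\<psi> has_vector_derivative (A t *v \<psi> t)) (at t within {0..T})"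
    and dp: "\<forall>t\<in>{0..T} - S2. (p has_vector_derivative (- (transpose (A t) *v p t))) (at t within {0..T})"
    and "0 \<le> u" "v \<le> T" "\<forall>t\<in>{u<..<v}. A t = M" "t \<in> {u..v} - (S1 \<union> S2 \<union> {u,v})"
  shows "((\<lambda>t. p t \<bullet> (F *v \<psi> t)) has_real_derivative (p t \<bullet> ((F ** M - M ** F) *v \<psi> t))) (at t within {u..v})"
proof -
  have t: "u < t" "t < v" using assms(6) by auto
  then have t0: "0 < t" "t < T" using assms(3,4) by auto
  have At: "A t = M" using assms(5) t by auto
  have e: "at t within {0..T} = at t" using t0 by (rule at_within_Icc_at)
  have tin: "t \<in> {0..T} - S1" "t \<in> {0..T} - S2" using assms(6) t0 by auto
  have d1: "(\<psi> has_vector_derivative (M *v \<psi> t)) (at t)" using dpsi tin(1) At e by metis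
  have d2: "(p has_vector_derivative (- (transpose M *v p t))) (at t)" using dp tin(2) At e by metis
  from bilin_deriv[OF d1 d2, of F]
  show ?thesis by (rule has_field_derivative_at_within)
qed

lemma switch_mid:
  assumes "u < t" "t < w" "0 < t" "t < T" "\<forall>s\<in>{u<..<t}. A s = M1" "\<forall>s\<in>{t<..<w}. A s = M2" "M1 \<noteq> M2"
  shows "switching_time T A t"
  unfolding switching_time_def
proof (intro conjI allI impI)
  fix e :: real assume "e > 0"
  define s1 where "s1 = max (t - e/2) ((u+t)/2)"
  define s2 where "s2 = min (t + e/2) ((t+w)/2)"
  have "t - e < s1 \<and> s1 < t \<and> t < s2 \<and> s2 < t + e"
    unfolding s1_def s2_def using \<open>e>0\<close> assms(1,2) by auto
  moreover have "s1 \<in> {u<..<t}" unfolding s1_def using assms(1) \<open>e>0\<close> by (auto simp: max_def)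
  then have "A s1 = M1" using assms(5) by blast
  moreover have "s2 \<in> {t<..<w}" unfolding s2_def using assms(2) \<open>e>0\<close> by (auto simp: min_def)
  then have "A s2 = M2" using assms(6) by blast
  ultimately show "\<exists>s1 s2. t - e < s1 \<and> s1 < t \<and> t < s2 \<and> s2 < t + e \<and> A s1 \<noteq> A s2"
    using assms(7) by metis
qed (use assms in auto)

definition e1v :: "real^3" where "e1v = vector [1, 0, 0]"

lemma X_psi0: "Xm g *v psi0 g = sin g *\<^sub>R e1v"
proof -
  have "sin g * (sin g)^2 + sin g * cos g * cos g = sin g"
    using sc1[of g "sin g"] by (simp add: power2_eq_square algebra_simps)
  then have h: "(sin g)\<^sup>2 * sin g + sin g * cos g * cos g = sin g" by (simp add: mult.commute)
  then show ?thesis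
    by (simp add: vec_eq_iff forall_3 matrix_vector_mult_def sum_3 Xm_def psi0_def e1v_def)
qed

lemma X_e1: "Xm g *v e1v = (- sin g) *\<^sub>R psi0 g"
  by (simp add: vec_eq_iff forall_3 matrix_vector_mult_def sum_3 Xm_def psi0_def e1v_def power2_eq_square)

lemma X_traj:
  assumes "0 < g" "g < pi/2"
  defines "\<psi>c \<equiv> (\<lambda>t. cos (sin g * t) *\<^sub>R psi0 g + sin (sin g * t) *\<^sub>R e1v)"
  shows "\<exists>A' \<psi>'. trajectory g (pi / (2 * sin g)) A' \<psi>' \<and> \<psi>' (pi / (2 * sin g)) \<in> SigmaT"
proof -
  have sp: "sin g > 0" using assms(1,2) by (auto intro: sin_gt_zero)
  have ac: "admissible_control g (pi / (2 * sin g)) (\<lambda>t. Xm g)"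
    unfolding admissible_control_def using sp by (auto intro!: exI[of _ "{}"])
  have der: "(\<psi>c has_vector_derivative (Xm g *v \<psi>c t)) (at t within D)" for t D
  proof -
    have "(\<psi>c has_vector_derivative ((- (sin (sin g * t) * sin g)) *\<^sub>R psi0 g + (cos (sin g * t) * sin g) *\<^sub>R e1v)) (at t within D)"
      unfolding \<psi>c_def by (auto intro!: derivative_eq_intros)
    moreover have "Xm g *v \<psi>c t = (- (sin (sin g * t) * sin g)) *\<^sub>R psi0 g + (cos (sin g * t) * sin g) *\<^sub>R e1v"
      unfolding \<psi>c_def mv_add_scale X_psi0 X_e1 by (simp add: algebra_simps)
    ultimately show ?thesis by simp
  qed
  have "trajectory g (pi / (2 * sin g)) (\<lambda>t. Xm g) \<psi>c"
    unfolding trajectory_def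
  proof (intro conjI ac)
    show "\<psi>c 0 = psi0 g" unfolding \<psi>c_def by simp
    show "continuous_on {0..pi / (2 * sin g)} \<psi>c" unfolding \<psi>c_def by (intro continuous_intros)
    show "\<exists>S. finite S \<and> (\<forall>t\<in>{0..pi / (2 * sin g)} - S. (\<psi>c has_vector_derivative Xm g *v \<psi>c t) (at t within {0..pi / (2 * sin g)}))"
      using der by auto
  qed
  moreover have "\<psi>c (pi / (2 * sin g)) \<in> SigmaT"
  proof -
    have "sin g * (pi / (2 * sin g)) = pi/2" using sp by simp
    then show ?thesis unfolding \<psi>c_def SigmaT_def using sp
      by (simp add: inner_vec_def sum_3 e3_def psi0_def e1v_def)
  qed
  ultimately show ?thesis by blast
qed


theorem mainTheorem11:
  fixes \<gamma> T t0 l1 l2 a b :: real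
    and A :: "real \<Rightarrow> real^3^3" and \<psi> p :: "real \<Rightarrow> real^3"
  assumes "0 < \<gamma>" and "\<gamma> < pi / 2"
    and "regular_normal_extremal \<gamma> T A \<psi> p"
    and "0 < l1" and "l1 < 2 * pi" and "0 < l2" and "l2 < 2 * pi"
    and "YXY_block \<gamma> T A t0 l1 (pi / sin \<gamma>) l2"
    and "phi \<gamma> \<psi> p t0 = (0, a, b)" and "a \<noteq> 0"
  shows "phi \<gamma> \<psi> p (t0 + l1 + pi / sin \<gamma> + l2) = (0, -a, b)
    \<and> (\<forall>\<psi>' p' :: real \<Rightarrow> real^3.
         (\<forall>t\<in>{0..pi / sin \<gamma>}.
            (\<psi>' has_vector_derivative (Xm \<gamma> *v \<psi>' t)) (at t within {0..pi / sin \<gamma>}) \<and>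
            (p' has_vector_derivative (- (transpose (Xm \<gamma>) *v p' t))) (at t within {0..pi / sin \<gamma>}))
         \<and> phi \<gamma> \<psi>' p' 0 = (0, a, b)
         \<longrightarrow> phi \<gamma> \<psi>' p' (pi / sin \<gamma>) = (0, -a, b))
    \<and> l1 + pi / sin \<gamma> + l2 > pi / sin \<gamma>
    \<and> \<not> time_optimal \<gamma> T A \<psi>"
proof -
  have sp: "sin \<gamma> > 0" using assms(1,2) by (auto intro: sin_gt_zero)
  define \<tau> where "\<tau> = pi / sin \<gamma>"
  have \<tau>p: "\<tau> > 0" unfolding \<tau>_def using sp by simp
  define t1 where "t1 = t0 + l1"
  define t2 where "t2 = t1 + \<tau>"
  define t3 where "t3 = t2 + l2"
  have t3eq: "t0 + l1 + pi / sin \<gamma> + l2 = t3" unfolding t1_def t2_def t3_def \<tau>_def by simp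
  from assms(3) have NE: "normal_extremal \<gamma> T A \<psi> p"
    and regz: "\<And>t. switching_time T A t \<Longrightarrow> fst (phi \<gamma> \<psi> p t) = 0"
    unfolding regular_normal_extremal_def by auto
  from NE have TR: "trajectory \<gamma> T A \<psi>" and cp: "continuous_on {0..T} p"
    and "\<exists>S. finite S \<and> (\<forall>t\<in>{0..T} - S.
        (p has_vector_derivative (- (transpose (A t) *v p t))) (at t within {0..T}))"
    unfolding normal_extremal_def by auto
  then obtain S2 where S2: "finite S2" and dp: "\<forall>t\<in>{0..T} - S2.
        (p has_vector_derivative (- (transpose (A t) *v p t))) (at t within {0..T})" by blast
  from TR have cpsi: "continuous_on {0..T} \<psi>"
    and "\<exists>S. finite S \<and> (\<forall>t\<in>{0..T} - S.
        (\<psi> has_vector_derivative (A t *v \<psi> t)) (at t within {0..T}))"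
    unfolding trajectory_def by auto
  then obtain S1 where S1: "finite S1" and dpsi: "\<forall>t\<in>{0..T} - S1.
        (\<psi> has_vector_derivative (A t *v \<psi> t)) (at t within {0..T})" by blast
  from assms(8) have AY1: "\<forall>t\<in>{t0<..<t1}. A t = Ym" and AX: "\<forall>t\<in>{t1<..<t2}. A t = Xm \<gamma>"
    and AY2: "\<forall>t\<in>{t2<..<t3}. A t = Ym" and sw0: "switching_time T A t0"
    and sw3: "switching_time T A t3"
    unfolding YXY_block_def t1_def t2_def t3_def \<tau>_def by auto
  have t0p: "0 < t0" using sw0 unfolding switching_time_def by auto
  have t3T: "t3 < T" using sw3 unfolding switching_time_def by auto
  have ord: "t0 < t1" "t1 < t2" "t2 < t3" unfolding t1_def t2_def t3_def using assms(4,6) \<tau>p by auto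
  have sw1: "switching_time T A t1"
    by (rule switch_mid[OF ord(1) ord(2) _ _ AY1 AX XneY[OF assms(1,2), symmetric]])
      (use t0p ord t3T in auto)
  define g1 where "g1 = (\<lambda>t. p t \<bullet> (F1 \<gamma> *v \<psi> t))"
  define g2 where "g2 = (\<lambda>t. p t \<bullet> (F2 \<gamma> *v \<psi> t))"
  define g3 where "g3 = (\<lambda>t. p t \<bullet> (F3 \<gamma> *v \<psi> t))"
  have phig: "phi \<gamma> \<psi> p t = (g1 t, g2 t, g3 t)" for t
    unfolding phi_def g1_def g2_def g3_def by simp
  have cg: "continuous_on {u..v} g1 \<and> continuous_on {u..v} g2 \<and> continuous_on {u..v} g3"
    if "0 \<le> u" "v \<le> T" for u v
  proof -
    have sub: "{u..v} \<subseteq> {0..T}" using that by auto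
    have "continuous_on {u..v} p" "continuous_on {u..v} \<psi>"
      using continuous_on_subset[OF cp sub] continuous_on_subset[OF cpsi sub] by auto
    then show ?thesis unfolding g1_def g2_def g3_def
      by (auto intro!: continuous_intros bounded_linear.continuous_on[OF matrix_vector_mul_bounded_linear])
  qed
  have KF: "finite (S1 \<union> S2 \<union> {u,v})" for u v :: real using S1 S2 by simp
  note AD = arc_deriv[OF dpsi dp]
  have g0: "g1 t0 = 0" "g2 t0 = a" "g3 t0 = b" using assms(9) phig[of t0] by auto
  have g1t1: "g1 t1 = 0" using regz[OF sw1] phig[of t1] by simp
  have g1t3: "g1 t3 = 0" using regz[OF sw3] phig[of t3] by simp
  have Y1: "g1 t1 - g3 t1 = g1 t0 - g3 t0 \<and> g2 t1 = g2 t0 * cos (t1-t0) - g3 t0 * sin (t1-t0)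
     \<and> g3 t1 = g2 t0 * sin (t1-t0) + g3 t0 * cos (t1-t0)"
  proof (rule Y_arc[OF _ KF])
    show "t0 \<le> t1" using ord by simp
    show "continuous_on {t0..t1} g1" "continuous_on {t0..t1} g2" "continuous_on {t0..t1} g3"
      using cg[of t0 t1] t0p ord t3T by auto
    fix t assume t: "t \<in> {t0..t1} - (S1 \<union> S2 \<union> {t0, t1})"
    have l: "0 \<le> t0" "t1 \<le> T" using t0p ord t3T by auto
    show "(g1 has_real_derivative g2 t) (at t within {t0..t1}) \<and>
        (g2 has_real_derivative - g3 t) (at t within {t0..t1}) \<and>
        (g3 has_real_derivative g2 t) (at t within {t0..t1})"
      using AD[OF l AY1 t, of "F1 \<gamma>"] AD[OF l AY1 t, of "F2 \<gamma>"] AD[OF l AY1 t, of "F3 \<gamma>"]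
      unfolding g1_def g2_def g3_def comm_Y1 comm_Y2 comm_Y3 mv_neg inner_minus_right by auto
  qed
  have l1eq: "t1 - t0 = l1" unfolding t1_def by simp
  have g3t1: "g3 t1 = b" using Y1 g0 g1t1 by simp
  have g2t1: "g2 t1 = - a"
    using Y1 g0 g3t1 rot_lemma[OF assms(10) assms(4) assms(5), of b] unfolding l1eq by simp
  have X1: "g1 t2 = - g1 t1 \<and> g2 t2 = - g2 t1 \<and> g3 t2 - (sin \<gamma>)^2 * g1 t2 = g3 t1 - (sin \<gamma>)^2 * g1 t1"
  proof (rule X_arc[OF sp _ KF])
    show "t2 = t1 + pi / sin \<gamma>" unfolding t2_def \<tau>_def by simp
    show "continuous_on {t1..t2} g1" "continuous_on {t1..t2} g2" "continuous_on {t1..t2} g3"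
      using cg[of t1 t2] t0p ord t3T by auto
    fix t assume t: "t \<in> {t1..t2} - (S1 \<union> S2 \<union> {t1, t2})"
    have l: "0 \<le> t1" "t2 \<le> T" using t0p ord t3T by auto
    show "(g1 has_real_derivative g2 t) (at t within {t1..t2}) \<and>
        (g2 has_real_derivative - ((sin \<gamma>)^2 * g1 t)) (at t within {t1..t2}) \<and>
        (g3 has_real_derivative (sin \<gamma>)^2 * g2 t) (at t within {t1..t2})"
      using AD[OF l AX t, of "F1 \<gamma>"] AD[OF l AX t, of "F2 \<gamma>"] AD[OF l AX t, of "F3 \<gamma>"]
      unfolding g1_def g2_def g3_def comm_X1 comm_X2 comm_X3 mv_scale inner_scaleR_right by auto
  qed
  have g2: "g1 t2 = 0" "g2 t2 = a" "g3 t2 = b" using X1 g1t1 g2t1 g3t1 by auto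
  have Y2: "g1 t3 - g3 t3 = g1 t2 - g3 t2 \<and> g2 t3 = g2 t2 * cos (t3-t2) - g3 t2 * sin (t3-t2)
     \<and> g3 t3 = g2 t2 * sin (t3-t2) + g3 t2 * cos (t3-t2)"
  proof (rule Y_arc[OF _ KF])
    show "t2 \<le> t3" using ord by simp
    show "continuous_on {t2..t3} g1" "continuous_on {t2..t3} g2" "continuous_on {t2..t3} g3"
      using cg[of t2 t3] t0p ord t3T by auto
    fix t assume t: "t \<in> {t2..t3} - (S1 \<union> S2 \<union> {t2, t3})"
    have l: "0 \<le> t2" "t3 \<le> T" using t0p ord t3T by auto
    show "(g1 has_real_derivative g2 t) (at t within {t2..t3}) \<and>
        (g2 has_real_derivative - g3 t) (at t within {t2..t3}) \<and>
        (g3 has_real_derivative g2 t) (at t within {t2..t3})"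
      using AD[OF l AY2 t, of "F1 \<gamma>"] AD[OF l AY2 t, of "F2 \<gamma>"] AD[OF l AY2 t, of "F3 \<gamma>"]
      unfolding g1_def g2_def g3_def comm_Y1 comm_Y2 comm_Y3 mv_neg inner_minus_right by auto
  qed
  have l2eq: "t3 - t2 = l2" unfolding t3_def by simp
  have g3t3: "g3 t3 = b" using Y2 g2 g1t3 by simp
  have g2t3: "g2 t3 = - a"
    using Y2 g2 g3t3 rot_lemma[OF assms(10) assms(6) assms(7), of b] unfolding l2eq by simp
  have C1: "phi \<gamma> \<psi> p (t0 + l1 + pi / sin \<gamma> + l2) = (0, -a, b)"
    unfolding t3eq phig using g1t3 g2t3 g3t3 by simp
  have C2: "phi \<gamma> \<psi>' p' (pi / sin \<gamma>) = (0, -a, b)"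
    if H: "\<forall>t\<in>{0..pi / sin \<gamma>}.
            (\<psi>' has_vector_derivative (Xm \<gamma> *v \<psi>' t)) (at t within {0..pi / sin \<gamma>}) \<and>
            (p' has_vector_derivative (- (transpose (Xm \<gamma>) *v p' t))) (at t within {0..pi / sin \<gamma>})"
      and H0: "phi \<gamma> \<psi>' p' 0 = (0, a, b)" for \<psi>' p' :: "real \<Rightarrow> real^3"
  proof -
    define h1 where "h1 = (\<lambda>t. p' t \<bullet> (F1 \<gamma> *v \<psi>' t))"
    define h2 where "h2 = (\<lambda>t. p' t \<bullet> (F2 \<gamma> *v \<psi>' t))"
    define h3 where "h3 = (\<lambda>t. p' t \<bullet> (F3 \<gamma> *v \<psi>' t))"
    have phih: "phi \<gamma> \<psi>' p' t = (h1 t, h2 t, h3 t)" for t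
      unfolding phi_def h1_def h2_def h3_def by simp
    have D: "(h1 has_real_derivative h2 t) (at t within {0..0 + pi / sin \<gamma>}) \<and>
        (h2 has_real_derivative - ((sin \<gamma>)^2 * h1 t)) (at t within {0..0 + pi / sin \<gamma>}) \<and>
        (h3 has_real_derivative (sin \<gamma>)^2 * h2 t) (at t within {0..0 + pi / sin \<gamma>})"
      if t: "t \<in> {0..0 + pi / sin \<gamma>}" for t
    proof -
      have d1: "(\<psi>' has_vector_derivative (Xm \<gamma> *v \<psi>' t)) (at t within {0..pi / sin \<gamma>})"
        and d2: "(p' has_vector_derivative (- (transpose (Xm \<gamma>) *v p' t))) (at t within {0..pi / sin \<gamma>})"
        using H t by auto
      show ?thesis
        using bilin_deriv[OF d1 d2, of "F1 \<gamma>"] bilin_deriv[OF d1 d2, of "F2 \<gamma>"] bilin_deriv[OF d1 d2, of "F3 \<gamma>"]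
        unfolding h1_def h2_def h3_def comm_X1 comm_X2 comm_X3 mv_scale inner_scaleR_right by auto
    qed
    have cont: "continuous_on {0..0 + pi / sin \<gamma>} h" if "\<And>t. t \<in> {0..0 + pi / sin \<gamma>} \<Longrightarrow> \<exists>d. (h has_real_derivative d) (at t within {0..0 + pi / sin \<gamma>})" for h
      using that by (meson DERIV_continuous continuous_on_eq_continuous_within)
    have R: "h1 (0 + pi / sin \<gamma>) = - h1 0 \<and> h2 (0 + pi / sin \<gamma>) = - h2 0 \<and>
       h3 (0 + pi / sin \<gamma>) - (sin \<gamma>)^2 * h1 (0 + pi / sin \<gamma>) = h3 0 - (sin \<gamma>)^2 * h1 0"
    proof (rule X_arc[OF sp refl finite.emptyI])
      show "continuous_on {0..0 + pi / sin \<gamma>} h1" "continuous_on {0..0 + pi / sin \<gamma>} h2"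
        "continuous_on {0..0 + pi / sin \<gamma>} h3"
        by (rule cont; use D in blast)+
      fix t assume "t \<in> {0..0 + pi / sin \<gamma>} - {}"
      then show "(h1 has_real_derivative h2 t) (at t within {0..0 + pi / sin \<gamma>}) \<and>
        (h2 has_real_derivative - ((sin \<gamma>)^2 * h1 t)) (at t within {0..0 + pi / sin \<gamma>}) \<and>
        (h3 has_real_derivative (sin \<gamma>)^2 * h2 t) (at t within {0..0 + pi / sin \<gamma>})"
        using D by blast
    qed
    have "h1 0 = 0" "h2 0 = a" "h3 0 = b" using H0 phih[of 0] by auto
    moreover have "h1 (pi / sin \<gamma>) = 0" using R \<open>h1 0 = 0\<close> by simp
    ultimately show ?thesis using R unfolding phih by simp
  qed
  have C4: "\<not> time_optimal \<gamma> T A \<psi>"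
  proof
    assume "time_optimal \<gamma> T A \<psi>"
    then have all: "\<And>T' A' \<psi>'. trajectory \<gamma> T' A' \<psi>' \<and> \<psi>' T' \<in> SigmaT \<Longrightarrow> T \<le> T'"
      unfolding time_optimal_def by blast
    obtain A' \<psi>' where "trajectory \<gamma> (pi / (2 * sin \<gamma>)) A' \<psi>' \<and> \<psi>' (pi / (2 * sin \<gamma>)) \<in> SigmaT"
      using X_traj[OF assms(1,2)] by blast
    then have "T \<le> pi / (2 * sin \<gamma>)" by (rule all)
    moreover have "pi / (2 * sin \<gamma>) < \<tau>" unfolding \<tau>_def using sp by (simp add: field_simps)
    moreover have "\<tau> < T" using ord t3T t0p unfolding t2_def t1_def using assms(4) by linarith
    ultimately show False by linarith
  qed
  show ?thesis using C1 C2 C4 assms(4,6) by auto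
qed

end
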